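(* Let $G=(V,E)$ be a finite connected graph and let $x,y,v,w\in V$. Suppose there is a nonempty set $C\subseteq V$ with diameter $D=\max_{c,c'\in C} d(c,c')$ such that, for every two vertices $a,b\in\{x,y,v,w\}$, every shortest path between $a$ and $b$ contains a vertex of $C$. Then $\delta(x,y,v,w)\le D$.
   Context: $G$ is an undirected graph in which every edge has length $1$, and $d(a,b)$ denotes the shortest-path distance between vertices $a,b$. For vertices $x,y,v,w$, the hyperbolicity $\delta(x,y,v,w)$ of the $4$-tuple is defined as half the difference between the largest and the second largest of the three sums $d(x,y)+d(v,w)$, $d(x,v)+d(y,w)$, $d(x,w)+d(y,v)$ (if the two largest coincide, $\delta=0$). *)

theory Defs
  imports Complex_Main
begin

definition is_graph :: "'a set \<Rightarrow> ('a \<Rightarrow> 'a \<Rightarrow> bool) \<Rightarrow> bool" where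
  "is_graph V E \<longleftrightarrow> finite V \<and> (\<forall>a b. E a b \<longrightarrow> a \<in> V \<and> b \<in> V)
     \<and> (\<forall>a b. E a b \<longrightarrow> E b a) \<and> (\<forall>a. \<not> E a a)"

definition is_path :: "('a \<Rightarrow> 'a \<Rightarrow> bool) \<Rightarrow> 'a \<Rightarrow> 'a \<Rightarrow> 'a list \<Rightarrow> bool" where
  "is_path E a b p \<longleftrightarrow> p \<noteq> [] \<and> hd p = a \<and> last p = b
     \<and> (\<forall>i. Suc i < length p \<longrightarrow> E (p ! i) (p ! Suc i))"

definition connected_graph :: "'a set \<Rightarrow> ('a \<Rightarrow> 'a \<Rightarrow> bool) \<Rightarrow> bool" where
  "connected_graph V E \<longleftrightarrow> (\<forall>a\<in>V. \<forall>b\<in>V. \<exists>p. is_path E a b p)"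

definition gdist :: "('a \<Rightarrow> 'a \<Rightarrow> bool) \<Rightarrow> 'a \<Rightarrow> 'a \<Rightarrow> nat" where
  "gdist E a b = (LEAST n. \<exists>p. is_path E a b p \<and> length p = Suc n)"

definition shortest_path :: "('a \<Rightarrow> 'a \<Rightarrow> bool) \<Rightarrow> 'a \<Rightarrow> 'a \<Rightarrow> 'a list \<Rightarrow> bool" where
  "shortest_path E a b p \<longleftrightarrow> is_path E a b p \<and> length p = Suc (gdist E a b)"

text \<open>Hyperbolicity of a 4-tuple: half of (largest - second largest) of the three sums.\<close>
definition hyp_delta :: "('a \<Rightarrow> 'a \<Rightarrow> bool) \<Rightarrow> 'a \<Rightarrow> 'a \<Rightarrow> 'a \<Rightarrow> 'a \<Rightarrow> real" where
  "hyp_delta E x y v w =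
    (let s1 = real (gdist E x y + gdist E v w);
         s2 = real (gdist E x v + gdist E y w);
         s3 = real (gdist E x w + gdist E y v);
         l1 = max s1 (max s2 s3);
         l2 = s1 + s2 + s3 - l1 - min s1 (min s2 s3)
     in (l1 - l2) / 2)"

end

theory Submission
  imports Defs
begin

lemma gdist_le: "is_path E a b p \<Longrightarrow> gdist E a b \<le> length p - 1"
  unfolding gdist_def
  by (rule Least_le) (auto simp: is_path_def)

lemma gdist_ex: "is_path E a b p \<Longrightarrow> \<exists>q. is_path E a b q \<and> length q = Suc (gdist E a b)"
  unfolding gdist_def
  apply (rule LeastI_ex[where P="\<lambda>n. \<exists>q. is_path E a b q \<and> length q = Suc n"])
  by (rule exI[of _ "length p - 1"]) (auto simp: is_path_def)

lemma path_take: "is_path E a b p \<Longrightarrow> i < length p \<Longrightarrow> is_path E a (p!i) (take (Suc i) p)"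
proof -
  assume p: "is_path E a b p" and i: "i < length p"
  have l: "length (take (Suc i) p) = Suc i" using i by simp
  show ?thesis unfolding is_path_def
  proof (intro conjI allI impI)
    show "take (Suc i) p \<noteq> []" using l by (metis Zero_not_Suc list.size(3))
    show "hd (take (Suc i) p) = a" using p by (simp add: is_path_def hd_take)
    have "take (Suc i) p \<noteq> []" using l by (metis Zero_not_Suc list.size(3))
    then have "last (take (Suc i) p) = take (Suc i) p ! i" using l by (simp add: last_conv_nth)
    then show "last (take (Suc i) p) = p ! i" by simp
    fix j assume "Suc j < length (take (Suc i) p)"
    then have "Suc j < length p" "Suc j \<le> i" using l i by auto
    thus "E (take (Suc i) p ! j) (take (Suc i) p ! Suc j)" using p by (simp add: is_path_def)
  qed
qed

lemma path_drop: "is_path E a b p \<Longrightarrow> i < length p \<Longrightarrow> is_path E (p!i) b (drop i p)"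
proof -
  assume p: "is_path E a b p" and i: "i < length p"
  show ?thesis unfolding is_path_def
  proof (intro conjI allI impI)
    show "drop i p \<noteq> []" using i by simp
    show "hd (drop i p) = p ! i" using i by (simp add: hd_drop_conv_nth)
    show "last (drop i p) = b" using p i by (simp add: is_path_def)
    fix j assume "Suc j < length (drop i p)"
    then have "Suc (i + j) < length p" by simp
    thus "E (drop i p ! j) (drop i p ! Suc j)" using p i by (simp add: is_path_def)
  qed
qed

lemma path_rev: "is_path E a b p \<Longrightarrow> (\<forall>a b. E a b \<longrightarrow> E b a) \<Longrightarrow> is_path E b a (rev p)"
proof -
  assume p: "is_path E a b p" and s: "\<forall>a b. E a b \<longrightarrow> E b a"
  show ?thesis unfolding is_path_def
  proof (intro conjI allI impI)
    show "rev p \<noteq> []" using p by (simp add: is_path_def)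
    show "hd (rev p) = b" using p by (simp add: is_path_def hd_rev)
    show "last (rev p) = a" using p by (simp add: is_path_def last_rev)
    fix j assume j: "Suc j < length (rev p)"
    define k where "k = length p - Suc (Suc j)"
    have k: "Suc k < length p" "length p - Suc j = Suc k" using j by (auto simp: k_def)
    have "E (p ! k) (p ! Suc k)" using p k by (simp add: is_path_def)
    hence "E (p ! Suc k) (p ! k)" using s by blast
    moreover have "rev p ! j = p ! Suc k" using j k by (simp add: rev_nth)
    moreover have "rev p ! Suc j = p ! k" using j k by (simp add: rev_nth k_def)
    ultimately show "E (rev p ! j) (rev p ! Suc j)" by simp
  qed
qed


lemma path_append: "is_path E a b p \<Longrightarrow> is_path E b c q \<Longrightarrow> is_path E a c (p @ tl q)"
proof -
  assume p: "is_path E a b p" and q: "is_path E b c q"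
  have q': "q = b # tl q" using q unfolding is_path_def by (metis list.collapse)
  have "p @ tl q = butlast p @ q"
    using p q' unfolding is_path_def by (metis append_butlast_last_id append_Cons append_assoc append_Nil)
  show ?thesis unfolding is_path_def
  proof (intro conjI allI impI)
    show "p @ tl q \<noteq> []" using p by (auto simp: is_path_def)
    show "hd (p @ tl q) = a" using p by (auto simp: is_path_def)
    show "last (p @ tl q) = c" using p q q' unfolding is_path_def
      by (metis last_ConsL last_ConsR last_append list.sel(3) self_append_conv)
    fix i assume i: "Suc i < length (p @ tl q)"
    show "E ((p @ tl q) ! i) ((p @ tl q) ! Suc i)"
    proof (cases "Suc i < length p")
      case True then show ?thesis using p by (auto simp: is_path_def nth_append)
    next
      case False
      hence "i \<ge> length p - 1" by simp
      have eq: "p @ tl q = butlast p @ q" by fact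
      have lb: "length (butlast p) = length p - 1" by simp
      have "Suc (i - (length p - 1)) < length q" using i eq lb \<open>i \<ge> length p - 1\<close> by auto
      then have "E (q ! (i - (length p - 1))) (q ! Suc (i - (length p - 1)))" using q by (auto simp: is_path_def)
      moreover have "Suc i - (length p - 1) = Suc (i - (length p - 1))" using \<open>i \<ge> length p - 1\<close> by simp
      ultimately show ?thesis unfolding eq using \<open>i \<ge> length p - 1\<close> lb
        by (simp add: nth_append)
    qed
  qed
qed

lemma delta_gen:
  fixes s1 s2 s3 D :: real
  assumes "s1 \<le> s2 + 2*D \<or> s1 \<le> s3 + 2*D" "s2 \<le> s1 + 2*D \<or> s2 \<le> s3 + 2*D" "s3 \<le> s1 + 2*D \<or> s3 \<le> s2 + 2*D"
  shows "(max s1 (max s2 s3) - (s1 + s2 + s3 - max s1 (max s2 s3) - min s1 (min s2 s3))) / 2 \<le> D"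
  using assms unfolding max_def min_def by auto

theorem proposition2:
  fixes V :: "'a set" and E :: "'a \<Rightarrow> 'a \<Rightarrow> bool" and x y v w :: 'a and C :: "'a set"
  assumes "is_graph V E" and "connected_graph V E"
    and "x \<in> V" "y \<in> V" "v \<in> V" "w \<in> V"
    and "C \<subseteq> V" and "C \<noteq> {}"
    and "\<forall>a\<in>{x, y, v, w}. \<forall>b\<in>{x, y, v, w}. a \<noteq> b \<longrightarrow> (\<forall>p. shortest_path E a b p \<longrightarrow> (\<exists>c\<in>C. c \<in> set p))"
  shows "hyp_delta E x y v w \<le> real (Max {gdist E c c' | c c'. c \<in> C \<and> c' \<in> C})"
proof -
  note G = assms(1)[unfolded is_graph_def]
  have symE: "\<forall>a b. E a b \<longrightarrow> E b a" using G by blast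
  have finC: "finite C" using G assms(7) finite_subset by blast
  have pe: "\<And>a b. a \<in> V \<Longrightarrow> b \<in> V \<Longrightarrow> \<exists>p. is_path E a b p"
    using assms(2) unfolding connected_graph_def by blast
  have sp: "\<And>a b. a \<in> V \<Longrightarrow> b \<in> V \<Longrightarrow> \<exists>p. is_path E a b p \<and> length p = Suc (gdist E a b)"
    using pe gdist_ex by metis
  have tri: "gdist E a c \<le> gdist E a b + gdist E b c" if H: "a \<in> V" "b \<in> V" "c \<in> V" for a b c
  proof -
    obtain p where p: "is_path E a b p" "length p = Suc (gdist E a b)" using sp[OF H(1,2)] by blast
    obtain q where q: "is_path E b c q" "length q = Suc (gdist E b c)" using sp[OF H(2,3)] by blast
    have "is_path E a c (p @ tl q)" using path_append[OF p(1) q(1)] .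
    from gdist_le[OF this] show ?thesis using p q by simp
  qed
  have symd: "gdist E a b = gdist E b a" if "a \<in> V" "b \<in> V" for a b
  proof -
    have "gdist E a b \<le> gdist E b a" if H: "a \<in> V" "b \<in> V" for a b
    proof -
      obtain p where p: "is_path E b a p" "length p = Suc (gdist E b a)" using sp[OF H(2,1)] by blast
      from gdist_le[OF path_rev[OF p(1) symE]] show ?thesis using p by simp
    qed
    thus ?thesis using that by (meson le_antisym)
  qed
  have d0: "gdist E a a = 0" for a
    using gdist_le[of E a a "[a]"] by (simp add: is_path_def)
  define S where "S = {gdist E c c' | c c'. c \<in> C \<and> c' \<in> C}"
  have S_eq: "S = (\<lambda>(c,c'). gdist E c c') ` (C \<times> C)" unfolding S_def by auto
  have finS: "finite S" using S_eq finC by simp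
  define D where "D = Max S"
  have Dge: "gdist E c c' \<le> D" if "c \<in> C" "c' \<in> C" for c c'
    unfolding D_def using finS that by (auto simp: S_def intro!: Max_ge)
  define r where "r a = Min ((\<lambda>c. gdist E a c) ` C)" for a
  have rle: "r a \<le> gdist E a c" if "c \<in> C" for a c
    unfolding r_def using finC that by simp
  have rin: "\<exists>c\<in>C. r a = gdist E a c" for a
  proof -
    have "Min ((\<lambda>c. gdist E a c) ` C) \<in> (\<lambda>c. gdist E a c) ` C"
      using finC assms(8) by (intro Min_in) auto
    thus ?thesis unfolding r_def by blast
  qed
  have upper: "gdist E a b \<le> r a + r b + D" if "a \<in> V" "b \<in> V" for a b
  proof -
    obtain ca where ca: "ca \<in> C" "r a = gdist E a ca" using rin by blast
    obtain cb where cb: "cb \<in> C" "r b = gdist E b cb" using rin by blast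
    have V: "ca \<in> V" "cb \<in> V" using ca cb assms(7) by auto
    have "gdist E a b \<le> gdist E a ca + gdist E ca b" using tri that V by blast
    also have "gdist E ca b \<le> gdist E ca cb + gdist E cb b" using tri that V by blast
    also have "gdist E cb b = gdist E b cb" using symd that V by blast
    finally show ?thesis using ca cb Dge[OF ca(1) cb(1)] by linarith
  qed
  have lower: "r a + r b \<le> gdist E a b" if H: "a \<in> {x,y,v,w}" "b \<in> {x,y,v,w}" "a \<noteq> b" for a b
  proof -
    have ab: "a \<in> V" "b \<in> V" using H assms(3-6) by auto
    obtain p where p: "is_path E a b p" "length p = Suc (gdist E a b)" using sp[OF ab] by blast
    then have "shortest_path E a b p" unfolding shortest_path_def by simp
    then obtain c where c: "c \<in> C" "c \<in> set p" using assms(9) H by blast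
    then obtain i where i: "i < length p" "p ! i = c" by (meson in_set_conv_nth)
    have cV: "c \<in> V" using c assms(7) by auto
    have "gdist E a c \<le> i" using gdist_le[OF path_take[OF p(1) i(1)]] i by simp
    moreover have "gdist E c b \<le> length p - 1 - i" using gdist_le[OF path_drop[OF p(1) i(1)]] i by simp
    moreover have "gdist E c b = gdist E b c" using symd cV ab by blast
    ultimately show ?thesis using rle[OF c(1), of a] rle[OF c(1), of b] p(2) i by linarith
  qed
  have V4: "x \<in> V" "y \<in> V" "v \<in> V" "w \<in> V" using assms(3-6) by auto
  have L: "\<And>a b. a \<in> {x,y,v,w} \<Longrightarrow> b \<in> {x,y,v,w} \<Longrightarrow> a \<noteq> b \<longrightarrow> real (r a) + real (r b) \<le> real (gdist E a b)"
    using lower by (metis of_nat_add of_nat_le_iff)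
  have U: "\<And>a b. a \<in> {x,y,v,w} \<Longrightarrow> b \<in> {x,y,v,w} \<Longrightarrow> real (gdist E a b) \<le> real (r a) + real (r b) + real D"
    using upper V4 by (metis (no_types, lifting) empty_iff insert_iff of_nat_add of_nat_le_iff)
  have Z: "\<And>a b. a = b \<longrightarrow> real (gdist E a b) = 0" using d0 by simp
  have M: "x \<in> {x,y,v,w}" "y \<in> {x,y,v,w}" "v \<in> {x,y,v,w}" "w \<in> {x,y,v,w}" by auto
  note L1 = L[OF M(1) M(2)] L[OF M(3) M(4)] L[OF M(1) M(3)] L[OF M(2) M(4)] L[OF M(1) M(4)] L[OF M(2) M(3)]
  note U1 = U[OF M(1) M(2)] U[OF M(3) M(4)] U[OF M(1) M(3)] U[OF M(2) M(4)] U[OF M(1) M(4)] U[OF M(2) M(3)]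
  note Z1 = Z[of x y] Z[of v w] Z[of x v] Z[of y w] Z[of x w] Z[of y v]
  have SY: "real (gdist E a b) = real (gdist E b a)" if "a \<in> {x,y,v,w}" "b \<in> {x,y,v,w}" for a b
    using symd that V4 by auto
  note S1 = SY[OF M(1) M(2)] SY[OF M(3) M(4)] SY[OF M(1) M(3)] SY[OF M(2) M(4)] SY[OF M(1) M(4)] SY[OF M(2) M(3)]
  note F = L1 U1 Z1 S1 of_nat_0_le_iff[of "r x"] of_nat_0_le_iff[of "r y"] of_nat_0_le_iff[of "r v"] of_nat_0_le_iff[of "r w"]
      of_nat_0_le_iff[of "D"]
  define s1 where "s1 = real (gdist E x y + gdist E v w)"
  define s2 where "s2 = real (gdist E x v + gdist E y w)"
  define s3 where "s3 = real (gdist E x w + gdist E y v)"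
  have c1: "s1 \<le> s2 + 2 * real D \<or> s1 \<le> s3 + 2 * real D"
    unfolding s1_def s2_def s3_def of_nat_add using F by (smt (verit))
  have c2: "s2 \<le> s1 + 2 * real D \<or> s2 \<le> s3 + 2 * real D"
    unfolding s1_def s2_def s3_def of_nat_add using F by (smt (verit))
  have c3: "s3 \<le> s1 + 2 * real D \<or> s3 \<le> s2 + 2 * real D"
    unfolding s1_def s2_def s3_def of_nat_add using F by (smt (verit))
  have "hyp_delta E x y v w \<le> real D"
    unfolding hyp_delta_def Let_def s1_def[symmetric] s2_def[symmetric] s3_def[symmetric]
    by (rule delta_gen[OF c1 c2 c3])
  thus ?thesis unfolding D_def S_def .
qed

end
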